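(* For every instance, a probability distribution $q$ on the tests is a memoryless schedule attaining $\mathrm{opt}_M\text{-}\mathrm{MAX}$ (the infimum over memoryless schedules of the common value $\mathrm{WMP}[q]=\mathrm{MWP}[q]=\mathrm{WEP}[q]=\max_e p_e/Q_e$) if and only if $q$ (together with some $z$) is an optimal solution of the linear program $$\text{maximize } z\quad\text{subject to } \frac{1}{p_e}\sum_{i:\,e\in s_i}q_i\ge z\ \ (e\in E),\quad q_i\ge 0\ \ (i\in[m]),\quad \sum_iq_i=1.$$
   Context: An instance consists of a finite set $E$ of elements with positive weights $(p_e)_{e\in E}$ normalized so that $\max_e p_e=1$, and $m$ tests; test $i\in[m]$ is a subset $s_i\subseteq E$. A memoryless schedule is a probability distribution $q$ on $[m]$; it generates a test sequence by drawing each test independently according to $q$. $Q_e=\sum_{i:e\in s_i}q_i$. Detection time $T(e,t)=\mathbb{E}[1+\min\{h\ge0:e\in s_{\sigma_{t+h}}\}]$; $\mathrm{WMP}=\sup_{e,t}p_eT(e,t)$, $\mathrm{WEP}=\max_e p_e\lim_H\frac1H\sum_{t\le H}T(e,t)$, $\mathrm{MWP}=\lim_H\frac1H\sum_{t\le H}\max_ep_eT(e,t)$. *)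

theory Defs
  imports "HOL-Analysis.Analysis"
begin

text \<open>Tests are indexed by 0..<m; test i is the set s i.
  A memoryless schedule is a probability vector q on {0..<m}.\<close>

definition is_instance :: "'a set \<Rightarrow> ('a \<Rightarrow> real) \<Rightarrow> nat \<Rightarrow> (nat \<Rightarrow> 'a set) \<Rightarrow> bool" where
  "is_instance E p m s \<longleftrightarrow> finite E \<and> (\<forall>e\<in>E. 0 < p e) \<and> (\<forall>e\<in>E. p e \<le> 1)
     \<and> (\<exists>e\<in>E. p e = 1) \<and> (\<forall>i<m. s i \<subseteq> E)"

definition memoryless_schedule :: "nat \<Rightarrow> (nat \<Rightarrow> real) \<Rightarrow> bool" where
  "memoryless_schedule m q \<longleftrightarrow> (\<forall>i<m. 0 \<le> q i) \<and> (\<Sum>i<m. q i) = 1"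

definition Qe :: "nat \<Rightarrow> (nat \<Rightarrow> 'a set) \<Rightarrow> (nat \<Rightarrow> real) \<Rightarrow> 'a \<Rightarrow> real" where
  "Qe m s q e = (\<Sum>i\<in>{i. i < m \<and> e \<in> s i}. q i)"

text \<open>The common value WMP = MWP = WEP of a memoryless schedule: max_e p_e / Q_e,
  with p_e / 0 = \<infinity> (element never tested).\<close>
definition memoryless_value ::
  "'a set \<Rightarrow> ('a \<Rightarrow> real) \<Rightarrow> nat \<Rightarrow> (nat \<Rightarrow> 'a set) \<Rightarrow> (nat \<Rightarrow> real) \<Rightarrow> ereal" where
  "memoryless_value E p m s q =
     (SUP e\<in>E. (if Qe m s q e = 0 then \<infinity> else ereal (p e / Qe m s q e)))"

definition opt_M_MAX :: "'a set \<Rightarrow> ('a \<Rightarrow> real) \<Rightarrow> nat \<Rightarrow> (nat \<Rightarrow> 'a set) \<Rightarrow> ereal" where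
  "opt_M_MAX E p m s = (INF q\<in>{q. memoryless_schedule m q}. memoryless_value E p m s q)"

definition lp_feasible ::
  "'a set \<Rightarrow> ('a \<Rightarrow> real) \<Rightarrow> nat \<Rightarrow> (nat \<Rightarrow> 'a set) \<Rightarrow> (nat \<Rightarrow> real) \<Rightarrow> real \<Rightarrow> bool" where
  "lp_feasible E p m s q z \<longleftrightarrow>
     (\<forall>e\<in>E. (1 / p e) * (\<Sum>i\<in>{i. i < m \<and> e \<in> s i}. q i) \<ge> z)
     \<and> (\<forall>i<m. q i \<ge> 0) \<and> (\<Sum>i<m. q i) = 1"

definition lp_optimal ::
  "'a set \<Rightarrow> ('a \<Rightarrow> real) \<Rightarrow> nat \<Rightarrow> (nat \<Rightarrow> 'a set) \<Rightarrow> (nat \<Rightarrow> real) \<Rightarrow> real \<Rightarrow> bool" where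
  "lp_optimal E p m s q z \<longleftrightarrow> lp_feasible E p m s q z \<and>
     (\<forall>q' z'. lp_feasible E p m s q' z' \<longrightarrow> z' \<le> z)"

end

theory Submission
  imports Defs
begin

definition fmin :: "'a set \<Rightarrow> ('a \<Rightarrow> real) \<Rightarrow> nat \<Rightarrow> (nat \<Rightarrow> 'a set) \<Rightarrow> (nat \<Rightarrow> real) \<Rightarrow> real" where
  "fmin E p m s q = Min ((\<lambda>e. (1 / p e) * Qe m s q e) ` E)"

lemma inst_facts:
  assumes "is_instance E p m s"
  shows "finite E" "E \<noteq> {}" "\<And>e. e \<in> E \<Longrightarrow> 0 < p e"
  using assms unfolding is_instance_def by auto

lemma Qe_nonneg:
  assumes "memoryless_schedule m q" shows "0 \<le> Qe m s q e"
  using assms unfolding memoryless_schedule_def Qe_def by (auto intro: sum_nonneg)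

lemma fmin_le:
  assumes "is_instance E p m s" "e \<in> E"
  shows "fmin E p m s q \<le> (1 / p e) * Qe m s q e"
  using assms inst_facts[OF assms(1)] unfolding fmin_def by auto

lemma fmin_in:
  assumes "is_instance E p m s"
  obtains e where "e \<in> E" "fmin E p m s q = (1 / p e) * Qe m s q e"
proof -
  have "fmin E p m s q \<in> (\<lambda>e. (1 / p e) * Qe m s q e) ` E"
    unfolding fmin_def using inst_facts[OF assms] by (intro Min_in) auto
  thus ?thesis using that by auto
qed

lemma fmin_nonneg:
  assumes "is_instance E p m s" "memoryless_schedule m q"
  shows "0 \<le> fmin E p m s q"
proof -
  obtain e where e: "e \<in> E" "fmin E p m s q = (1 / p e) * Qe m s q e" using fmin_in[OF assms(1)] by blast
  moreover have "0 < p e" using inst_facts(3)[OF assms(1)] e(1) by blast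
  moreover have "0 \<le> Qe m s q e" using Qe_nonneg[OF assms(2)] .
  ultimately show ?thesis by simp
qed

lemma value_zero:
  assumes "is_instance E p m s" "memoryless_schedule m q" "fmin E p m s q = 0"
  shows "memoryless_value E p m s q = \<infinity>"
proof -
  obtain e where e: "e \<in> E" "fmin E p m s q = (1 / p e) * Qe m s q e" using fmin_in[OF assms(1)] by blast
  have "Qe m s q e = 0" using e assms(3) inst_facts(3)[OF assms(1) e(1)] by simp
  have "(if Qe m s q e = 0 then \<infinity> else ereal (p e / Qe m s q e)) \<le> memoryless_value E p m s q"
    unfolding memoryless_value_def by (rule SUP_upper[OF e(1)])
  hence "\<infinity> \<le> memoryless_value E p m s q" using \<open>Qe m s q e = 0\<close> by simp
  thus ?thesis by simp
qed

lemma value_pos: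
  assumes "is_instance E p m s" "memoryless_schedule m q" "fmin E p m s q > 0"
  shows "memoryless_value E p m s q = ereal (1 / fmin E p m s q)"
proof -
  let ?f = "fmin E p m s q"
  obtain e0 where e0: "e0 \<in> E" "?f = (1 / p e0) * Qe m s q e0" using fmin_in[OF assms(1)] by blast
  have p0: "p e0 > 0" using inst_facts(3)[OF assms(1) e0(1)] .
  have Q0: "Qe m s q e0 > 0" using e0 p0 assms(3)
    by (metis Qe_nonneg assms(2) less_eq_real_def mult_zero_right)
  have t0: "p e0 / Qe m s q e0 = 1 / ?f" using e0 p0 Q0 by simp
  show ?thesis unfolding memoryless_value_def
  proof (rule antisym)
    show "(SUP e\<in>E. (if Qe m s q e = 0 then \<infinity> else ereal (p e / Qe m s q e))) \<le> ereal (1 / ?f)"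
    proof (rule SUP_least)
      fix e assume e: "e \<in> E"
      have pe: "p e > 0" using inst_facts(3)[OF assms(1) e] .
      have le: "?f \<le> (1 / p e) * Qe m s q e" using fmin_le[OF assms(1) e] .
      hence Qp: "Qe m s q e > 0" using assms(3) pe
        by (metis Qe_nonneg assms(2) less_eq_real_def mult_zero_right not_le)
      have "?f \<le> Qe m s q e / p e" using le by simp
      hence "p e / Qe m s q e \<le> 1 / ?f" using pe Qp assms(3)
        by (simp add: field_simps)
      thus "(if Qe m s q e = 0 then \<infinity> else ereal (p e / Qe m s q e)) \<le> ereal (1 / ?f)"
        using Qp by simp
    qed
  next
    have "(if Qe m s q e0 = 0 then \<infinity> else ereal (p e0 / Qe m s q e0)) = ereal (1 / ?f)"
      using Q0 t0 by simp
    moreover have "(if Qe m s q e0 = 0 then \<infinity> else ereal (p e0 / Qe m s q e0)) \<le> (SUP e\<in>E. (if Qe m s q e = 0 then \<infinity> else ereal (p e / Qe m s q e)))"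
      by (rule SUP_upper[OF e0(1)])
    ultimately show "ereal (1 / ?f) \<le> (SUP e\<in>E. (if Qe m s q e = 0 then \<infinity> else ereal (p e / Qe m s q e)))"
      by simp
  qed
qed

lemma value_mono:
  assumes "is_instance E p m s" "memoryless_schedule m q" "memoryless_schedule m q'"
    "fmin E p m s q' \<le> fmin E p m s q"
  shows "memoryless_value E p m s q \<le> memoryless_value E p m s q'"
proof (cases "fmin E p m s q' = 0")
  case True thus ?thesis using value_zero[OF assms(1,3)] by simp
next
  case False
  hence pos: "fmin E p m s q' > 0" using fmin_nonneg[OF assms(1,3)] by simp
  hence pos2: "fmin E p m s q > 0" using assms(4) by simp
  show ?thesis using value_pos[OF assms(1,2) pos2] value_pos[OF assms(1,3) pos] assms(4) pos
    by (simp add: frac_le)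
qed

lemma value_anti:
  assumes "is_instance E p m s" "memoryless_schedule m q" "memoryless_schedule m q'"
    "memoryless_value E p m s q \<le> memoryless_value E p m s q'"
  shows "fmin E p m s q' \<le> fmin E p m s q"
proof (cases "fmin E p m s q' = 0")
  case True thus ?thesis using fmin_nonneg[OF assms(1,2)] by simp
next
  case False
  hence pos: "fmin E p m s q' > 0" using fmin_nonneg[OF assms(1,3)] by simp
  have pos2: "fmin E p m s q > 0"
  proof (rule ccontr)
    assume "\<not> ?thesis"
    hence "fmin E p m s q = 0" using fmin_nonneg[OF assms(1,2)] by simp
    thus False using value_zero[OF assms(1,2)] value_pos[OF assms(1,3) pos] assms(4) by simp
  qed
  have "1 / fmin E p m s q \<le> 1 / fmin E p m s q'"
    using value_pos[OF assms(1,2) pos2] value_pos[OF assms(1,3) pos] assms(4) by simp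
  thus ?thesis using pos pos2 by (simp add: divide_le_cancel field_simps)
qed

lemma feasible_iff:
  assumes "is_instance E p m s"
  shows "lp_feasible E p m s q z \<longleftrightarrow> memoryless_schedule m q \<and> z \<le> fmin E p m s q"
proof
  assume a: "lp_feasible E p m s q z"
  hence ms: "memoryless_schedule m q" unfolding lp_feasible_def memoryless_schedule_def by auto
  obtain e where e: "e \<in> E" "fmin E p m s q = (1 / p e) * Qe m s q e" using fmin_in[OF assms] by blast
  have "z \<le> fmin E p m s q" using a e unfolding lp_feasible_def Qe_def by auto
  thus "memoryless_schedule m q \<and> z \<le> fmin E p m s q" using ms by simp
next
  assume a: "memoryless_schedule m q \<and> z \<le> fmin E p m s q"
  show "lp_feasible E p m s q z" unfolding lp_feasible_def
  proof (intro conjI ballI)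
    fix e assume "e \<in> E"
    from fmin_le[OF assms this, of q] a show "z \<le> 1 / p e * (\<Sum>i\<in>{i. i < m \<and> e \<in> s i}. q i)"
      unfolding Qe_def by linarith
  qed (use a in \<open>auto simp: memoryless_schedule_def\<close>)
qed

theorem theorem2:
  fixes E :: "'a set" and p :: "'a \<Rightarrow> real" and m :: nat and s :: "nat \<Rightarrow> 'a set"
    and q :: "nat \<Rightarrow> real"
  assumes "is_instance E p m s"
  shows "(memoryless_schedule m q \<and> memoryless_value E p m s q = opt_M_MAX E p m s)
         \<longleftrightarrow> (\<exists>z. lp_optimal E p m s q z)"
proof
  assume a: "memoryless_schedule m q \<and> memoryless_value E p m s q = opt_M_MAX E p m s"
  have best: "fmin E p m s q' \<le> fmin E p m s q" if "memoryless_schedule m q'" for q'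
  proof -
    have "memoryless_value E p m s q \<le> memoryless_value E p m s q'"
      using a that unfolding opt_M_MAX_def by (metis INF_lower mem_Collect_eq)
    thus ?thesis using value_anti[OF assms] a that by blast
  qed
  have "lp_optimal E p m s q (fmin E p m s q)"
    unfolding lp_optimal_def using feasible_iff[OF assms] a best by (meson order_trans order_refl)
  thus "\<exists>z. lp_optimal E p m s q z" by blast
next
  assume "\<exists>z. lp_optimal E p m s q z"
  then obtain z where z: "lp_optimal E p m s q z" by blast
  have ms: "memoryless_schedule m q" and zf: "z \<le> fmin E p m s q"
    using z feasible_iff[OF assms] unfolding lp_optimal_def by auto
  have best: "fmin E p m s q' \<le> fmin E p m s q" if "memoryless_schedule m q'" for q'
  proof -
    have "lp_feasible E p m s q' (fmin E p m s q')" using feasible_iff[OF assms] that by simp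
    hence "fmin E p m s q' \<le> z" using z unfolding lp_optimal_def by blast
    thus ?thesis using zf by simp
  qed
  have "memoryless_value E p m s q = opt_M_MAX E p m s"
    unfolding opt_M_MAX_def
  proof (rule antisym)
    show "memoryless_value E p m s q \<le> (INF q'\<in>{q. memoryless_schedule m q}. memoryless_value E p m s q')"
      using value_mono[OF assms ms] best by (auto intro!: INF_greatest)
    show "(INF q'\<in>{q. memoryless_schedule m q}. memoryless_value E p m s q') \<le> memoryless_value E p m s q"
      using ms by (auto intro: INF_lower)
  qed
  thus "memoryless_schedule m q \<and> memoryless_value E p m s q = opt_M_MAX E p m s" using ms by simp
qed

end
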